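(* Let $\omega$ be the Cartan connection on $P\to\mathbb R^3$ given by Theorem 3 for a nondegenerate pair of direction fields, and write its curvature as $\Omega_{12}=a\,\omega_{21}\wedge\omega_{31}$, $\Omega_{23}=d\,\omega_{31}\wedge\omega_{32}$, $\Omega_{13}=b\,\omega_{21}\wedge\omega_{31}+c\,\omega_{31}\wedge\omega_{32}$ (all other entries zero) with functions $a,b,c,d$ on $P$. Then $b=u_2^*a$ and $c=-u_1^*d$, where $u_1=E_{21}$, $u_2=E_{32}\in\mathfrak{sl}(3,\mathbb R)$ and $u^*$ denotes the vector field on $P$ with $\omega(u^* )=u$.
   Context: Theorem 3 (normal Cartan connection): with $\overline G=SL(3,\mathbb R)$ and $G$ its upper-triangular subgroup, for a nondegenerate pair of direction fields $(E_1,E_2)$ in $\mathbb R^3$ (i.e. $E_1\ne E_2$ pointwise and $E_1\oplus E_2$ not completely integrable) there is, unique up to isomorphism, a principal $G$-bundle $P\to\mathbb R^3$ with a Cartan connection $\omega=(\omega_{ij})$ (an $\mathfrak{sl}(3,\mathbb R)$-valued 1-form with $\omega(X^* )=X$ for $X\in\mathfrak g$, $R_g^*\omega=\mathrm{Ad}(g^{-1})\omega$, $\omega_p$ bijective) such that $E_1=\{s^*\omega_{21},s^*\omega_{31}\}^\perp$, $E_2=\{s^*\omega_{31},s^*\omega_{32}\}^\perp$ for local sections $s$, and whose curvature $\Omega=d\omega+\frac12[\omega,\omega]$ has the form $\begin{pmatrix}0&a\omega_{21}\wedge\omega_{31}&b\omega_{21}\wedge\omega_{31}+c\omega_{31}\wedge\omega_{32}\\0&0&d\omega_{31}\wedge\omega_{32}\\0&0&0\end{pmatrix}$.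 $E_{ij}$ denotes the matrix unit. *)

theory Defs
  imports "HOL-Analysis.Analysis"
begin

(* 3x3 real matrices; entry (i,j) is  A $ i $ j  with indices 1,2,3 of type 3
   (note: in type 3 the numeral 3 denotes the third element, which equals 0;
   the three indices 1,2,3 are pairwise distinct, so this is just a labelling). *)
type_synonym mat3 = "real^3^3"

(* Points of P = R^3 x G, embedded in the ambient space R^3 x R^(3x3). *)
type_synonym pt = "(real^3) \<times> (real^3^3)"

definition Emat :: "3 \<Rightarrow> 3 \<Rightarrow> mat3" where
  "Emat i j = (\<chi> k l. if k = i \<and> l = j then 1 else 0)"

definition sl3 :: "mat3 set" where
  "sl3 = {A. trace A = 0}"

definition upper3 :: "mat3 \<Rightarrow> bool" where
  "upper3 A \<longleftrightarrow> A $ 2 $ 1 = 0 \<and> A $ 3 $ 1 = 0 \<and> A $ 3 $ 2 = 0"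

definition Gset :: "mat3 set" where
  "Gset = {g. upper3 g \<and> det g = 1}"

definition gLie :: "mat3 set" where
  "gLie = {X. upper3 X \<and> trace X = 0}"

definition lie_br :: "mat3 \<Rightarrow> mat3 \<Rightarrow> mat3" where
  "lie_br A B = A ** B - B ** A"

definition Pset :: "pt set" where
  "Pset = UNIV \<times> Gset"

definition tangent :: "pt \<Rightarrow> pt set" where
  "tangent p = {(v, snd p ** Y) | v Y. Y \<in> gLie}"

fun iter_dd :: "('a::real_normed_vector \<Rightarrow> 'b::real_normed_vector) \<Rightarrow> 'a list \<Rightarrow> 'a \<Rightarrow> 'b" where
  "iter_dd f [] = f"
| "iter_dd f (v # vs) = (\<lambda>x. frechet_derivative (iter_dd f vs) (at x) v)"

definition smooth_on :: "'a::real_normed_vector set \<Rightarrow> ('a \<Rightarrow> 'b::real_normed_vector) \<Rightarrow> bool" where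
  "smooth_on U f \<longleftrightarrow> (\<forall>vs. \<forall>x\<in>U. iter_dd f vs differentiable (at x))"

definition vf_bracket :: "(real^3 \<Rightarrow> real^3) \<Rightarrow> (real^3 \<Rightarrow> real^3) \<Rightarrow> real^3 \<Rightarrow> real^3" where
  "vf_bracket X Y x = frechet_derivative Y (at x) (X x) - frechet_derivative X (at x) (Y x)"

definition direction_field :: "(real^3 \<Rightarrow> (real^3) set) \<Rightarrow> bool" where
  "direction_field E \<longleftrightarrow>
     (\<forall>x. \<exists>U e. open U \<and> x \<in> U \<and> smooth_on U e \<and>
        (\<forall>y\<in>U. e y \<noteq> 0 \<and> E y = span {e y}))"

definition nondegenerate_pair :: "(real^3 \<Rightarrow> (real^3) set) \<Rightarrow> (real^3 \<Rightarrow> (real^3) set) \<Rightarrow> bool" where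
  "nondegenerate_pair E1 E2 \<longleftrightarrow>
     direction_field E1 \<and> direction_field E2 \<and> (\<forall>x. E1 x \<noteq> E2 x) \<and>
     (\<forall>x U e1 e2. open U \<and> x \<in> U \<and> smooth_on U e1 \<and> smooth_on U e2 \<and>
        (\<forall>y\<in>U. E1 y = span {e1 y} \<and> E2 y = span {e2 y}) \<longrightarrow>
        vf_bracket e1 e2 x \<notin> span {e1 x, e2 x})"

(* A Cartan connection on P modelled on (SL(3,R), G).  omega p xi is the value of the
   sl(3)-valued 1-form at p on the tangent vector xi; omega is given as a smooth,
   fibrewise linear form on the ambient space, of which only the restriction to
   tangent vectors of P matters. *)
definition cartan_connection :: "(pt \<Rightarrow> pt \<Rightarrow> mat3) \<Rightarrow> bool" where
  "cartan_connection \<omega> \<longleftrightarrow>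
     (\<forall>p. linear (\<omega> p)) \<and>
     (\<forall>\<xi>. smooth_on UNIV (\<lambda>p. \<omega> p \<xi>)) \<and>
     (\<forall>p\<in>Pset. bij_betw (\<omega> p) (tangent p) sl3) \<and>
     (\<forall>x g X. g \<in> Gset \<and> X \<in> gLie \<longrightarrow> \<omega> (x, g) (0, g ** X) = X) \<and>
     (\<forall>x g h v Y. g \<in> Gset \<and> h \<in> Gset \<and> Y \<in> gLie \<longrightarrow>
        \<omega> (x, g ** h) (v, g ** Y ** h) = matrix_inv h ** \<omega> (x, g) (v, g ** Y) ** h)"

(* E1 = {s^*w21, s^*w31}^perp,  E2 = {s^*w31, s^*w32}^perp for local sections s(x) = (x, sigma x) *)
definition adapted :: "(pt \<Rightarrow> pt \<Rightarrow> mat3) \<Rightarrow> (real^3 \<Rightarrow> (real^3) set) \<Rightarrow> (real^3 \<Rightarrow> (real^3) set) \<Rightarrow> bool" where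
  "adapted \<omega> E1 E2 \<longleftrightarrow>
     (\<forall>V \<sigma>. open V \<and> smooth_on V \<sigma> \<and> (\<forall>x\<in>V. \<sigma> x \<in> Gset) \<longrightarrow>
       (\<forall>x\<in>V.
          E1 x = {v. \<omega> (x, \<sigma> x) (v, frechet_derivative \<sigma> (at x) v) $ 2 $ 1 = 0 \<and>
                     \<omega> (x, \<sigma> x) (v, frechet_derivative \<sigma> (at x) v) $ 3 $ 1 = 0} \<and>
          E2 x = {v. \<omega> (x, \<sigma> x) (v, frechet_derivative \<sigma> (at x) v) $ 3 $ 1 = 0 \<and>
                     \<omega> (x, \<sigma> x) (v, frechet_derivative \<sigma> (at x) v) $ 3 $ 2 = 0}))"

(* curvature Omega = d omega + 1/2 [omega, omega], evaluated on two (constant) vectors *)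
definition curv :: "(pt \<Rightarrow> pt \<Rightarrow> mat3) \<Rightarrow> pt \<Rightarrow> pt \<Rightarrow> pt \<Rightarrow> mat3" where
  "curv \<omega> p \<xi> \<eta> =
     frechet_derivative (\<lambda>q. \<omega> q \<eta>) (at p) \<xi> - frechet_derivative (\<lambda>q. \<omega> q \<xi>) (at p) \<eta>
     + lie_br (\<omega> p \<xi>) (\<omega> p \<eta>)"

definition wedge_ent :: "(pt \<Rightarrow> pt \<Rightarrow> mat3) \<Rightarrow> pt \<Rightarrow> 3 \<Rightarrow> 3 \<Rightarrow> 3 \<Rightarrow> 3 \<Rightarrow> pt \<Rightarrow> pt \<Rightarrow> real" where
  "wedge_ent \<omega> p i j k l \<xi> \<eta> =
     \<omega> p \<xi> $ i $ j * \<omega> p \<eta> $ k $ l - \<omega> p \<eta> $ i $ j * \<omega> p \<xi> $ k $ l"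

definition curvature_form :: "(pt \<Rightarrow> pt \<Rightarrow> mat3) \<Rightarrow> (pt \<Rightarrow> real) \<Rightarrow> (pt \<Rightarrow> real) \<Rightarrow> (pt \<Rightarrow> real) \<Rightarrow> (pt \<Rightarrow> real) \<Rightarrow> bool" where
  "curvature_form \<omega> a b c d \<longleftrightarrow>
     (\<forall>p\<in>Pset. \<forall>\<xi>\<in>tangent p. \<forall>\<eta>\<in>tangent p.
        curv \<omega> p \<xi> \<eta> =
          (\<chi> i j. if i = 1 \<and> j = 2 then a p * wedge_ent \<omega> p 2 1 3 1 \<xi> \<eta>
                  else if i = 1 \<and> j = 3 then b p * wedge_ent \<omega> p 2 1 3 1 \<xi> \<eta>
                                           + c p * wedge_ent \<omega> p 3 1 3 2 \<xi> \<eta>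
                  else if i = 2 \<and> j = 3 then d p * wedge_ent \<omega> p 3 1 3 2 \<xi> \<eta>
                  else 0))"

end

theory Submission
  imports Defs
begin



lemma real_dir_deriv:
  fixes f :: "'a::real_normed_vector \<Rightarrow> real"
  assumes "f differentiable at (a + s *\<^sub>R u)"
  shows "((\<lambda>t. f (a + t *\<^sub>R u)) has_real_derivative frechet_derivative f (at (a + s *\<^sub>R u)) u) (at s)"
proof -
  have d: "(f has_derivative frechet_derivative f (at (a + s *\<^sub>R u))) (at (a + s *\<^sub>R u))"
    using assms frechet_derivative_works by blast
  have l: "linear (frechet_derivative f (at (a + s *\<^sub>R u)))"
    using d has_derivative_linear by blast
  have "((\<lambda>t. a + t *\<^sub>R u) has_derivative (\<lambda>t. t *\<^sub>R u)) (at s)"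
    by (auto intro!: derivative_eq_intros)
  from has_derivative_compose[OF this d]
  have "((\<lambda>t. f (a + t *\<^sub>R u)) has_derivative (\<lambda>t. frechet_derivative f (at (a + s *\<^sub>R u)) (t *\<^sub>R u))) (at s)"
    by (simp add: o_def)
  moreover have "(\<lambda>t. frechet_derivative f (at (a + s *\<^sub>R u)) (t *\<^sub>R u)) = (*) (frechet_derivative f (at (a + s *\<^sub>R u)) u)"
    using linear_scale[OF l] by (auto simp: fun_eq_iff)
  ultimately show ?thesis
    unfolding has_field_derivative_def by simp
qed

lemma schwarz_step:
  fixes f :: "'a::real_normed_vector \<Rightarrow> real"
  assumes df: "\<And>x. f differentiable at x"
  and dgu: "\<And>x. (\<lambda>y. frechet_derivative f (at y) u) differentiable at x"
  and h: "h > 0"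
  shows "\<exists>z. norm (z - p) \<le> h * (norm u + norm v) \<and>
     f (p + h *\<^sub>R u + h *\<^sub>R v) - f (p + h *\<^sub>R u) - f (p + h *\<^sub>R v) + f p
      = h^2 * frechet_derivative (\<lambda>y. frechet_derivative f (at y) u) (at z) v"
proof -
  define g where "g = (\<lambda>y. frechet_derivative f (at y) u)"
  define G where "G = (\<lambda>z. frechet_derivative g (at z) v)"
  define \<psi> where "\<psi> = (\<lambda>s. f ((p + h *\<^sub>R v) + s *\<^sub>R u) - f (p + s *\<^sub>R u))"
  have "\<exists>z. 0 < z \<and> z < h \<and> \<psi> h - \<psi> 0 = (h - 0) * (g ((p + h *\<^sub>R v) + z *\<^sub>R u) - g (p + z *\<^sub>R u))"
  proof (rule MVT2[OF h])
    fix s :: real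
    show "(\<psi> has_real_derivative g ((p + h *\<^sub>R v) + s *\<^sub>R u) - g (p + s *\<^sub>R u)) (at s)"
      unfolding \<psi>_def g_def
      by (intro DERIV_diff real_dir_deriv df)
  qed
  then obtain \<sigma> where \<sigma>: "0 < \<sigma>" "\<sigma> < h" and e1: "\<psi> h - \<psi> 0 = h * (g ((p + h *\<^sub>R v) + \<sigma> *\<^sub>R u) - g (p + \<sigma> *\<^sub>R u))"
    by auto
  define chi where "chi = (\<lambda>t. g ((p + \<sigma> *\<^sub>R u) + t *\<^sub>R v))"
  have "\<exists>z. 0 < z \<and> z < h \<and> chi h - chi 0 = (h - 0) * G ((p + \<sigma> *\<^sub>R u) + z *\<^sub>R v)"
  proof (rule MVT2[OF h])
    fix s :: real
    show "(chi has_real_derivative G ((p + \<sigma> *\<^sub>R u) + s *\<^sub>R v)) (at s)"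
      unfolding chi_def G_def
      by (intro real_dir_deriv) (simp add: g_def dgu)
  qed
  then obtain \<tau> where \<tau>: "0 < \<tau>" "\<tau> < h" and e2: "chi h - chi 0 = h * G ((p + \<sigma> *\<^sub>R u) + \<tau> *\<^sub>R v)"
    by auto
  have n: "norm (\<sigma> *\<^sub>R u + \<tau> *\<^sub>R v) \<le> h * (norm u + norm v)"
  proof -
    have "norm (\<sigma> *\<^sub>R u + \<tau> *\<^sub>R v) \<le> \<sigma> * norm u + \<tau> * norm v"
      using \<sigma> \<tau> by (smt (verit) norm_scaleR norm_triangle_ineq)
    also have "\<dots> \<le> h * norm u + h * norm v"
      using \<sigma> \<tau> by (intro add_mono mult_right_mono) auto
    finally show ?thesis by (simp add: distrib_left)
  qed
  have "f (p + h *\<^sub>R u + h *\<^sub>R v) - f (p + h *\<^sub>R u) - f (p + h *\<^sub>R v) + f p = \<psi> h - \<psi> 0"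
    unfolding \<psi>_def by (simp add: algebra_simps)
  also have "\<dots> = h * (chi h - chi 0)" unfolding e1 chi_def by (simp add: algebra_simps)
  also have "\<dots> = h^2 * G ((p + \<sigma> *\<^sub>R u) + \<tau> *\<^sub>R v)" unfolding e2 by (simp add: power2_eq_square)
  finally show ?thesis
    using n unfolding G_def g_def
    by (intro exI[of _ "(p + \<sigma> *\<^sub>R u) + \<tau> *\<^sub>R v"]) (simp add: add.assoc)
qed

lemma schwarz_real:
  fixes f :: "'a::real_normed_vector \<Rightarrow> real"
  assumes df: "\<And>x. f differentiable at x"
  and dgu: "\<And>x. (\<lambda>y. frechet_derivative f (at y) u) differentiable at x"
  and dgv: "\<And>x. (\<lambda>y. frechet_derivative f (at y) v) differentiable at x"
  and cuv: "isCont (\<lambda>x. frechet_derivative (\<lambda>y. frechet_derivative f (at y) u) (at x) v) p"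
  and cvu: "isCont (\<lambda>x. frechet_derivative (\<lambda>y. frechet_derivative f (at y) v) (at x) u) p"
  shows "frechet_derivative (\<lambda>y. frechet_derivative f (at y) u) (at p) v
       = frechet_derivative (\<lambda>y. frechet_derivative f (at y) v) (at p) u"
proof (rule ccontr)
  define A where "A = (\<lambda>x. frechet_derivative (\<lambda>y. frechet_derivative f (at y) u) (at x) v)"
  define B where "B = (\<lambda>x. frechet_derivative (\<lambda>y. frechet_derivative f (at y) v) (at x) u)"
  assume "\<not> ?thesis"
  then have ne: "A p \<noteq> B p" unfolding A_def B_def .
  define e where "e = \<bar>A p - B p\<bar> / 2"
  have e: "e > 0" using ne unfolding e_def by simp
  obtain d1 where d1: "d1 > 0" "\<And>x. dist x p < d1 \<Longrightarrow> dist (A x) (A p) < e"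
    using cuv e unfolding continuous_at_eps_delta A_def by blast
  obtain d2 where d2: "d2 > 0" "\<And>x. dist x p < d2 \<Longrightarrow> dist (B x) (B p) < e"
    using cvu e unfolding continuous_at_eps_delta B_def by blast
  define h where "h = min d1 d2 / (2 * (norm u + norm v + 1))"
  have pos: "0 < 2 * (norm u + norm v + 1)" by (smt (verit) norm_ge_zero)
  have h: "h > 0" using d1 d2 pos unfolding h_def by (simp add: divide_pos_pos)
  have hb: "h * (norm u + norm v) < min d1 d2"
  proof -
    have "h * (norm u + norm v) \<le> h * (norm u + norm v + 1)" using h by simp
    also have "\<dots> = min d1 d2 / 2" unfolding h_def
      using pos by (simp add: field_simps)
    also have "\<dots> < min d1 d2" using d1 d2 by (simp add: min_def)
    finally show ?thesis .
  qed
  obtain z where z: "norm (z - p) \<le> h * (norm u + norm v)"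
    "f (p + h *\<^sub>R u + h *\<^sub>R v) - f (p + h *\<^sub>R u) - f (p + h *\<^sub>R v) + f p = h^2 * A z"
    using schwarz_step[OF df dgu h, of p v] unfolding A_def by blast
  obtain w where w: "norm (w - p) \<le> h * (norm v + norm u)"
    "f (p + h *\<^sub>R v + h *\<^sub>R u) - f (p + h *\<^sub>R v) - f (p + h *\<^sub>R u) + f p = h^2 * B w"
    using schwarz_step[OF df dgv h, of p u] unfolding B_def by blast
  have "h^2 * A z = h^2 * B w" using z(2) w(2) by (simp add: algebra_simps)
  then have AB: "A z = B w" using h by simp
  have "dist (A z) (A p) < e" using d1(2)[of z] z(1) hb by (simp add: dist_norm)
  moreover have "dist (B w) (B p) < e" using d2(2)[of w] w(1) hb by (simp add: dist_norm add.commute)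
  ultimately have "\<bar>A p - B p\<bar> < 2 * e" using AB by (simp add: dist_real_def)
  then show False unfolding e_def by simp
qed




lemma upper3_mult: "upper3 A \<Longrightarrow> upper3 B \<Longrightarrow> upper3 (A ** B)"
  unfolding upper3_def matrix_matrix_mult_def by (simp add: sum_3)

lemma det_upper3: "upper3 A \<Longrightarrow> det A = A$1$1 * A$2$2 * A$3$3"
  unfolding upper3_def by (simp add: det_3)

lemma mm_scaleR_right: "(A::mat3) ** (k *\<^sub>R B) = k *\<^sub>R (A ** B)"
  by (simp add: matrix_matrix_mult_def vec_eq_iff sum_3 algebra_simps)

lemma curve_zero:
  fixes f :: "pt \<Rightarrow> real"
  assumes df: "f differentiable at p" and p: "p \<in> Pset" and r: "r > 0"
    and z: "\<And>q. q \<in> Pset \<Longrightarrow> dist q p < r \<Longrightarrow> f q = 0"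
    and xi: "\<xi> \<in> tangent p"
  shows "frechet_derivative f (at p) \<xi> = 0"
proof -
  obtain x0 g where pg: "p = (x0, g)" and g: "g \<in> Gset" using p unfolding Pset_def by auto
  obtain v Y where xiv: "\<xi> = (v, g ** Y)" and Y: "Y \<in> gLie" using xi pg unfolding tangent_def by auto
  have trY: "Y$1$1 + Y$2$2 + Y$3$3 = 0" using Y unfolding gLie_def by (simp add: trace_def sum_3)
  define \<phi> where "\<phi> = (\<lambda>t::real. 1 / ((1 + t * Y$1$1) * (1 + t * Y$2$2)) - 1 - t * Y$3$3)"
  define E :: pt where "E = (0, g ** Emat 3 3)"
  define \<gamma> where "\<gamma> = (\<lambda>t. p + t *\<^sub>R \<xi> + \<phi> t *\<^sub>R E)"
  have dphi: "(\<phi> has_real_derivative 0) (at 0)"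
  proof -
    have "(\<phi> has_real_derivative (- ((Y$1$1 * 1 + 1 * Y$2$2) / 1) - Y$3$3)) (at 0)"
      unfolding \<phi>_def
      by (rule derivative_eq_intros refl | simp)+
    moreover have "- ((Y$1$1 * 1 + 1 * Y$2$2) / 1) - Y$3$3 = 0" using trY by simp
    ultimately show ?thesis by metis
  qed
  have dgam: "(\<gamma> has_vector_derivative \<xi>) (at 0)"
  proof -
    have "(\<gamma> has_vector_derivative (0 + (0 *\<^sub>R 0 + 1 *\<^sub>R \<xi>) + (\<phi> 0 *\<^sub>R 0 + 0 *\<^sub>R E))) (at 0)"
      unfolding \<gamma>_def
      by (intro has_vector_derivative_add has_vector_derivative_const has_vector_derivative_scaleR
          dphi DERIV_ident)
    then show ?thesis by simp
  qed
  have g0: "\<gamma> 0 = p" unfolding \<gamma>_def \<phi>_def by simp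
  have cg: "isCont \<gamma> 0" using dgam has_vector_derivative_continuous by blast
  have ev1: "\<forall>\<^sub>F t in nhds 0. dist (\<gamma> t) p < r"
  proof -
    obtain d where "d > 0" "\<And>t. dist t 0 < d \<Longrightarrow> dist (\<gamma> t) (\<gamma> 0) < r"
      using cg r unfolding continuous_at_eps_delta by blast
    then show ?thesis unfolding eventually_nhds_metric g0 by blast
  qed
  have ev2: "\<forall>\<^sub>F t in nhds 0. 0 < 1 + t * Y$1$1 \<and> 0 < 1 + t * Y$2$2"
  proof -
    define d where "d = 1 / (1 + \<bar>Y$1$1\<bar> + \<bar>Y$2$2\<bar>)"
    have d: "d > 0" unfolding d_def by (smt (verit) divide_pos_pos)
    have "0 < 1 + t * Y$1$1 \<and> 0 < 1 + t * Y$2$2" if "dist t 0 < d" for t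
    proof -
      have t: "\<bar>t\<bar> < d" using that by simp
      have "\<bar>t\<bar> * (1 + \<bar>Y$1$1\<bar> + \<bar>Y$2$2\<bar>) < 1"
        using t unfolding d_def by (smt (verit) divide_pos_pos pos_less_divide_eq)
      then have "\<bar>t * Y$1$1\<bar> < 1" "\<bar>t * Y$2$2\<bar> < 1"
        by (simp_all add: abs_mult) (smt (verit) abs_ge_zero mult_left_mono distrib_left)+
      then show ?thesis by linarith
    qed
    then show ?thesis unfolding eventually_nhds_metric using d by blast
  qed
  have memb: "\<gamma> t \<in> Pset" if t: "0 < 1 + t * Y$1$1" "0 < 1 + t * Y$2$2" for t
  proof -
    define M where "M = mat 1 + t *\<^sub>R Y + \<phi> t *\<^sub>R Emat 3 3"
    have gm: "\<gamma> t = (x0 + t *\<^sub>R v, g ** M)"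
      unfolding \<gamma>_def M_def pg xiv E_def
      by (simp add: matrix_add_ldistrib mm_scaleR_right)
    have uY: "upper3 Y" using Y unfolding gLie_def by auto
    have uM: "upper3 M" using uY unfolding M_def upper3_def Emat_def by (simp add: mat_def)
    have dM: "det M = 1"
    proof -
      have "M$1$1 = 1 + t * Y$1$1" "M$2$2 = 1 + t * Y$2$2"
        "M$3$3 = 1 / ((1 + t * Y$1$1) * (1 + t * Y$2$2))"
        unfolding M_def \<phi>_def Emat_def by (simp_all add: mat_def)
      then show ?thesis unfolding det_upper3[OF uM] using t by simp
    qed
    have "upper3 (g ** M)" using g uM upper3_mult unfolding Gset_def by auto
    moreover have "det (g ** M) = 1" using g dM unfolding Gset_def by (simp add: det_mul)
    ultimately show ?thesis unfolding gm Pset_def Gset_def by simp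
  qed
  have ev: "\<forall>\<^sub>F t in nhds 0. f (\<gamma> t) = 0"
    using ev1 ev2 by eventually_elim (auto intro: z memb)
  have d1: "((\<lambda>t. f (\<gamma> t)) has_real_derivative frechet_derivative f (at p) \<xi>) (at 0)"
  proof -
    have "(f has_derivative frechet_derivative f (at p)) (at (\<gamma> 0))"
      using df g0 frechet_derivative_works by metis
    from has_derivative_compose[OF dgam[unfolded has_vector_derivative_def] this]
    have "((\<lambda>t. f (\<gamma> t)) has_derivative (\<lambda>t. frechet_derivative f (at p) (t *\<^sub>R \<xi>))) (at 0)" .
    moreover have "linear (frechet_derivative f (at p))"
      using df frechet_derivative_works has_derivative_linear by blast
    then have "(\<lambda>t. frechet_derivative f (at p) (t *\<^sub>R \<xi>)) = (*) (frechet_derivative f (at p) \<xi>)"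
      by (auto simp: fun_eq_iff linear_scale)
    ultimately show ?thesis unfolding has_field_derivative_def by simp
  qed
  have d0: "((\<lambda>t. f (\<gamma> t)) has_real_derivative 0) (at 0)"
    by (rule DERIV_cong_ev[THEN iffD2, OF refl _ refl, of _ "\<lambda>_. 0"]) (use ev in auto)
  show ?thesis using DERIV_unique[OF d1 d0] .
qed




lemma lin_repr:
  fixes G :: "'c::euclidean_space \<Rightarrow> 'b::real_vector"
  assumes "linear G"
  shows "G w = (\<Sum>b\<in>Basis. (w \<bullet> b) *\<^sub>R G b)"
proof -
  have "G w = G (\<Sum>b\<in>Basis. (w \<bullet> b) *\<^sub>R b)" by (simp add: euclidean_representation)
  also have "\<dots> = (\<Sum>b\<in>Basis. (w \<bullet> b) *\<^sub>R G b)"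
    using assms by (simp add: linear_sum linear_scale)
  finally show ?thesis .
qed

lemma L1:
  fixes G :: "'a::real_normed_vector \<Rightarrow> 'c::euclidean_space \<Rightarrow> 'b::real_normed_vector"
  assumes lin: "\<And>q. linear (G q)" and dG: "\<And>e. (\<lambda>q. G q e) differentiable at p"
    and du: "(u has_derivative u') (at p)"
  shows "((\<lambda>q. G q (u q)) has_derivative
           (\<lambda>\<zeta>. frechet_derivative (\<lambda>q. G q (u p)) (at p) \<zeta> + G p (u' \<zeta>))) (at p)"
proof -
  define DG where "DG = (\<lambda>b. frechet_derivative (\<lambda>q. G q b) (at p))"
  have dGb: "((\<lambda>q. G q b) has_derivative DG b) (at p)" for b
    using dG frechet_derivative_works unfolding DG_def by blast
  have rep: "\<And>q w. G q w = (\<Sum>b\<in>Basis. (w \<bullet> b) *\<^sub>R G q b)"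
    using lin lin_repr by blast
  have d1: "((\<lambda>q. \<Sum>b\<in>Basis. (u q \<bullet> b) *\<^sub>R G q b) has_derivative
      (\<lambda>\<zeta>. \<Sum>b\<in>Basis. (u p \<bullet> b) *\<^sub>R DG b \<zeta> + (u' \<zeta> \<bullet> b) *\<^sub>R G p b)) (at p)"
    by (intro has_derivative_sum has_derivative_scaleR has_derivative_inner_left du dGb)
  have d2: "((\<lambda>q. \<Sum>b\<in>Basis. (u p \<bullet> b) *\<^sub>R G q b) has_derivative
      (\<lambda>\<zeta>. \<Sum>b\<in>Basis. (u p \<bullet> b) *\<^sub>R DG b \<zeta> + 0 *\<^sub>R G p b)) (at p)"
    by (intro has_derivative_sum has_derivative_scaleR has_derivative_const dGb)
  have fd: "frechet_derivative (\<lambda>q. G q (u p)) (at p) = (\<lambda>\<zeta>. \<Sum>b\<in>Basis. (u p \<bullet> b) *\<^sub>R DG b \<zeta>)"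
    using frechet_derivative_at[OF d2] by (simp add: rep[of _ "u p"])
  have eq: "(\<lambda>\<zeta>. \<Sum>b\<in>Basis. (u p \<bullet> b) *\<^sub>R DG b \<zeta> + (u' \<zeta> \<bullet> b) *\<^sub>R G p b)
      = (\<lambda>\<zeta>. frechet_derivative (\<lambda>q. G q (u p)) (at p) \<zeta> + G p (u' \<zeta>))"
    unfolding fd by (simp add: sum.distrib rep[of p "u' _"])
  show ?thesis using d1 unfolding eq by (simp add: rep[symmetric])
qed




definition K :: "(pt \<Rightarrow> pt \<Rightarrow> mat3) \<Rightarrow> pt \<Rightarrow> pt \<Rightarrow> pt \<Rightarrow> mat3" where
  "K \<omega> q \<eta> \<zeta> = frechet_derivative (\<lambda>r. \<omega> r \<eta>) (at q) \<zeta>"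

definition DDK :: "(pt \<Rightarrow> pt \<Rightarrow> mat3) \<Rightarrow> pt \<Rightarrow> pt \<Rightarrow> pt \<Rightarrow> pt \<Rightarrow> mat3" where
  "DDK \<omega> q \<eta> \<zeta> \<theta> = frechet_derivative (\<lambda>r. K \<omega> r \<eta> \<zeta>) (at q) \<theta>"

lemma fd_component:
  fixes F :: "pt \<Rightarrow> mat3"
  assumes "F differentiable at x"
  shows "(\<lambda>q. F q $ i $ j) differentiable at x"
    "frechet_derivative (\<lambda>q. F q $ i $ j) (at x) u = frechet_derivative F (at x) u $ i $ j"
proof -
  have d: "(F has_derivative frechet_derivative F (at x)) (at x)"
    using assms frechet_derivative_works by blast
  have bl: "bounded_linear (\<lambda>A::mat3. A $ i $ j)"
    using bounded_linear_compose[OF bounded_linear_vec_nth[of j] bounded_linear_vec_nth[of i]] by simp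
  have "((\<lambda>q. F q $ i $ j) has_derivative (\<lambda>u. frechet_derivative F (at x) u $ i $ j)) (at x)"
    using bounded_linear.has_derivative[OF bl d] .
  then show "(\<lambda>q. F q $ i $ j) differentiable at x"
    "frechet_derivative (\<lambda>q. F q $ i $ j) (at x) u = frechet_derivative F (at x) u $ i $ j"
    using differentiable_def frechet_derivative_at by metis+
qed

locale cc =
  fixes \<omega> :: "pt \<Rightarrow> pt \<Rightarrow> mat3"
  assumes cc: "cartan_connection \<omega>"
begin

lemma lin_om: "linear (\<omega> q)" using cc unfolding cartan_connection_def by blast

lemma sm: "iter_dd (\<lambda>q. \<omega> q \<eta>) vs differentiable at x"
  using cc unfolding cartan_connection_def smooth_on_def by blast

lemma d_om: "(\<lambda>q. \<omega> q \<eta>) differentiable at x"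
  using sm[of \<eta> "[]"] by simp

lemma d_K: "(\<lambda>q. K \<omega> q \<eta> \<zeta>) differentiable at x"
  using sm[of \<eta> "[\<zeta>]"] unfolding K_def by simp

lemma d_DDK: "(\<lambda>q. DDK \<omega> q \<eta> \<zeta> \<theta>) differentiable at x"
  using sm[of \<eta> "[\<theta>, \<zeta>]"] unfolding K_def DDK_def by simp

lemma has_om: "((\<lambda>q. \<omega> q \<eta>) has_derivative K \<omega> x \<eta>) (at x)"
  using d_om frechet_derivative_works unfolding K_def by blast

lemma lin_K2: "linear (K \<omega> q \<eta>)"
  using has_om has_derivative_linear by blast

lemma lin_K1: "linear (\<lambda>\<eta>. K \<omega> q \<eta> \<zeta>)"
proof (rule linearI)
  fix a b
  have e: "(\<lambda>r. \<omega> r (a + b)) = (\<lambda>r. \<omega> r a + \<omega> r b)"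
    by (intro ext linear_add[OF lin_om])
  have "((\<lambda>r. \<omega> r (a + b)) has_derivative (\<lambda>z. K \<omega> q a z + K \<omega> q b z)) (at q)"
    unfolding e by (intro has_derivative_add has_om)
  then have "K \<omega> q (a + b) = (\<lambda>z. K \<omega> q a z + K \<omega> q b z)"
    unfolding K_def by (rule frechet_derivative_at[symmetric])
  then show "K \<omega> q (a + b) \<zeta> = K \<omega> q a \<zeta> + K \<omega> q b \<zeta>" by simp
next
  fix c :: real and a
  have e: "(\<lambda>r. \<omega> r (c *\<^sub>R a)) = (\<lambda>r. c *\<^sub>R \<omega> r a)"
    by (intro ext linear_scale[OF lin_om])
  have "((\<lambda>r. \<omega> r (c *\<^sub>R a)) has_derivative (\<lambda>z. c *\<^sub>R K \<omega> q a z)) (at q)"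
    unfolding e by (intro has_derivative_scaleR_right has_om)
  then have "K \<omega> q (c *\<^sub>R a) = (\<lambda>z. c *\<^sub>R K \<omega> q a z)"
    unfolding K_def by (rule frechet_derivative_at[symmetric])
  then show "K \<omega> q (c *\<^sub>R a) \<zeta> = c *\<^sub>R K \<omega> q a \<zeta>" by simp
qed

lemma DDK_sym: "DDK \<omega> p \<eta> \<zeta> \<theta> = DDK \<omega> p \<eta> \<theta> \<zeta>"
proof -
  have "DDK \<omega> p \<eta> \<zeta> \<theta> $ i $ j = DDK \<omega> p \<eta> \<theta> \<zeta> $ i $ j" for i j
  proof -
    define f where "f = (\<lambda>q. \<omega> q \<eta> $ i $ j)"
    have fdf: "frechet_derivative f (at y) u = K \<omega> y \<eta> u $ i $ j" for y u
      unfolding f_def K_def by (rule fd_component(2)[OF d_om])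
    have fdK: "frechet_derivative (\<lambda>y. K \<omega> y \<eta> u $ i $ j) (at x) w = DDK \<omega> x \<eta> u w $ i $ j" for x u w
      unfolding DDK_def by (rule fd_component(2)[OF d_K])
    have cont: "isCont (\<lambda>x. DDK \<omega> x \<eta> u w $ i $ j) p" for u w
      using fd_component(1)[OF d_DDK] differentiable_imp_continuous_within by blast
    have "frechet_derivative (\<lambda>y. frechet_derivative f (at y) \<zeta>) (at p) \<theta>
        = frechet_derivative (\<lambda>y. frechet_derivative f (at y) \<theta>) (at p) \<zeta>"
    proof (rule schwarz_real)
      show "\<And>x. f differentiable at x" unfolding f_def by (rule fd_component(1)[OF d_om])
      show "\<And>x. (\<lambda>y. frechet_derivative f (at y) \<zeta>) differentiable at x"
        unfolding fdf by (rule fd_component(1)[OF d_K])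
      show "\<And>x. (\<lambda>y. frechet_derivative f (at y) \<theta>) differentiable at x"
        unfolding fdf by (rule fd_component(1)[OF d_K])
      show "isCont (\<lambda>x. frechet_derivative (\<lambda>y. frechet_derivative f (at y) \<zeta>) (at x) \<theta>) p"
        unfolding fdf fdK by (rule cont)
      show "isCont (\<lambda>x. frechet_derivative (\<lambda>y. frechet_derivative f (at y) \<theta>) (at x) \<zeta>) p"
        unfolding fdf fdK by (rule cont)
    qed
    then show ?thesis unfolding fdf fdK .
  qed
  then show ?thesis unfolding vec_eq_iff by blast
qed

end




lemma bil_mm: "bilinear (\<lambda>A B::mat3. A ** B)"
  unfolding bilinear_def
  by (auto intro!: linearI simp: matrix_add_ldistrib matrix_matrix_mult_def vec_eq_iff sum_3 algebra_simps)

lemma bb_mm: "bounded_bilinear (\<lambda>A B::mat3. A ** B)"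
  using bil_mm bilinear_conv_bounded_bilinear by blast

lemma mm_distribs:
  fixes A B C :: mat3
  shows "(A + B) ** C = A ** C + B ** C" "A ** (B + C) = A ** B + A ** C"
    "(A - B) ** C = A ** C - B ** C" "A ** (B - C) = A ** B - A ** C"
    "(- A) ** C = - (A ** C)" "A ** (- C) = - (A ** C)"
  by (simp_all add: matrix_matrix_mult_def vec_eq_iff sum_3 algebra_simps)

lemma has_derivative_lie:
  assumes "(A has_derivative A') (at p)" "(B has_derivative B') (at p)"
  shows "((\<lambda>q. lie_br (A q) (B q)) has_derivative
           (\<lambda>\<zeta>. lie_br (A' \<zeta>) (B p) + lie_br (A p) (B' \<zeta>))) (at p)"
proof -
  have "((\<lambda>q. A q ** B q - B q ** A q) has_derivative
      (\<lambda>\<zeta>. (A p ** B' \<zeta> + A' \<zeta> ** B p) - (B p ** A' \<zeta> + B' \<zeta> ** A p))) (at p)"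
    by (intro has_derivative_diff bounded_bilinear.FDERIV[OF bb_mm] assms)
  then show ?thesis unfolding lie_br_def by (simp add: algebra_simps)
qed

definition Xf :: "real^3 \<Rightarrow> mat3 \<Rightarrow> pt \<Rightarrow> pt" where
  "Xf v Y q = (v, snd q ** Y)"

definition Lf :: "mat3 \<Rightarrow> pt \<Rightarrow> pt" where
  "Lf Y \<zeta> = (0, snd \<zeta> ** Y)"

lemma has_Xf: "(Xf v Y has_derivative Lf Y) (at p)"
proof -
  have bl: "bounded_linear (\<lambda>M::mat3. M ** Y)"
    using bounded_bilinear.bounded_linear_left[OF bb_mm] .
  have "((\<lambda>q. (v, snd q ** Y)) has_derivative (\<lambda>\<zeta>. (0, snd \<zeta> ** Y))) (at p)"
    by (intro has_derivative_Pair has_derivative_const bounded_linear.has_derivative[OF bl]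
        has_derivative_snd has_derivative_ident)
  then show ?thesis unfolding Xf_def Lf_def .
qed

context cc begin

lemma has_alpha: "((\<lambda>q. \<omega> q (u q)) has_derivative (\<lambda>\<zeta>. K \<omega> p (u p) \<zeta> + \<omega> p (u' \<zeta>))) (at p)"
  if "(u has_derivative u') (at p)"
proof -
  have "((\<lambda>q. \<omega> q (u q)) has_derivative (\<lambda>\<zeta>. frechet_derivative (\<lambda>q. \<omega> q (u p)) (at p) \<zeta> + \<omega> p (u' \<zeta>))) (at p)"
    by (rule L1[OF lin_om d_om that])
  then show ?thesis unfolding K_def .
qed

lemma has_KK:
  assumes du: "(u has_derivative u') (at p)" and dv: "(v has_derivative v') (at p)"
  shows "((\<lambda>q. K \<omega> q (v q) (u q)) has_derivative
     (\<lambda>\<zeta>. DDK \<omega> p (v p) (u p) \<zeta> + K \<omega> p (v p) (u' \<zeta>) + K \<omega> p (v' \<zeta>) (u p))) (at p)"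
proof -
  have A: "((\<lambda>q. K \<omega> q e (u q)) has_derivative (\<lambda>\<zeta>. DDK \<omega> p e (u p) \<zeta> + K \<omega> p e (u' \<zeta>))) (at p)" for e
  proof -
    have "((\<lambda>q. K \<omega> q e (u q)) has_derivative (\<lambda>\<zeta>. frechet_derivative (\<lambda>q. K \<omega> q e (u p)) (at p) \<zeta> + K \<omega> p e (u' \<zeta>))) (at p)"
      by (rule L1[OF lin_K2 d_K du])
    then show ?thesis unfolding DDK_def .
  qed
  have "((\<lambda>q. K \<omega> q (v q) (u q)) has_derivative
     (\<lambda>\<zeta>. frechet_derivative (\<lambda>q. K \<omega> q (v p) (u q)) (at p) \<zeta> + K \<omega> p (v' \<zeta>) (u p))) (at p)"
    by (rule L1[where G="\<lambda>q \<eta>. K \<omega> q \<eta> (u q)", OF lin_K1 _ dv]) (use A differentiable_def in blast)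
  moreover have "frechet_derivative (\<lambda>q. K \<omega> q (v p) (u q)) (at p) = (\<lambda>\<zeta>. DDK \<omega> p (v p) (u p) \<zeta> + K \<omega> p (v p) (u' \<zeta>))"
    using frechet_derivative_at[OF A] by simp
  ultimately show ?thesis by simp
qed

lemma curv_expand: "curv \<omega> q \<xi> \<eta> = K \<omega> q \<eta> \<xi> - K \<omega> q \<xi> \<eta> + lie_br (\<omega> q \<xi>) (\<omega> q \<eta>)"
  unfolding curv_def K_def ..

definition dh :: "pt \<Rightarrow> real^3 \<Rightarrow> mat3 \<Rightarrow> real^3 \<Rightarrow> mat3 \<Rightarrow> pt \<Rightarrow> mat3" where
  "dh p vi Yi vj Yj \<zeta> =
     (DDK \<omega> p (Xf vj Yj p) (Xf vi Yi p) \<zeta> + K \<omega> p (Xf vj Yj p) (Lf Yi \<zeta>) + K \<omega> p (Lf Yj \<zeta>) (Xf vi Yi p))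
   - (DDK \<omega> p (Xf vi Yi p) (Xf vj Yj p) \<zeta> + K \<omega> p (Xf vi Yi p) (Lf Yj \<zeta>) + K \<omega> p (Lf Yi \<zeta>) (Xf vj Yj p))
   + (lie_br (K \<omega> p (Xf vi Yi p) \<zeta> + \<omega> p (Lf Yi \<zeta>)) (\<omega> p (Xf vj Yj p))
      + lie_br (\<omega> p (Xf vi Yi p)) (K \<omega> p (Xf vj Yj p) \<zeta> + \<omega> p (Lf Yj \<zeta>)))"

lemma has_h: "((\<lambda>q. curv \<omega> q (Xf vi Yi q) (Xf vj Yj q)) has_derivative dh p vi Yi vj Yj) (at p)"
proof -
  have "((\<lambda>q. K \<omega> q (Xf vj Yj q) (Xf vi Yi q) - K \<omega> q (Xf vi Yi q) (Xf vj Yj q)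
          + lie_br (\<omega> q (Xf vi Yi q)) (\<omega> q (Xf vj Yj q))) has_derivative dh p vi Yi vj Yj) (at p)"
    unfolding dh_def
    by (intro has_derivative_add has_derivative_diff has_KK has_Xf has_derivative_lie has_alpha)
  then show ?thesis unfolding curv_expand .
qed

end



context cc begin

lemma cyclic:
  fixes p :: pt and v1 v2 v3 :: "real^3" and Y1 Y2 Y3 :: mat3
  defines "\<xi>1 \<equiv> Xf v1 Y1 p" and "\<xi>2 \<equiv> Xf v2 Y2 p" and "\<xi>3 \<equiv> Xf v3 Y3 p"
  shows "dh p v1 Y1 v2 Y2 \<xi>3 + dh p v2 Y2 v3 Y3 \<xi>1 + dh p v3 Y3 v1 Y1 \<xi>2
   = lie_br (curv \<omega> p \<xi>1 \<xi>2) (\<omega> p \<xi>3) + lie_br (curv \<omega> p \<xi>2 \<xi>3) (\<omega> p \<xi>1)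
     + lie_br (curv \<omega> p \<xi>3 \<xi>1) (\<omega> p \<xi>2)
     + (curv \<omega> p (Lf Y1 \<xi>3) \<xi>2 - curv \<omega> p (Lf Y3 \<xi>1) \<xi>2)
     + (curv \<omega> p (Lf Y2 \<xi>1) \<xi>3 - curv \<omega> p (Lf Y1 \<xi>2) \<xi>3)
     + (curv \<omega> p (Lf Y3 \<xi>2) \<xi>1 - curv \<omega> p (Lf Y2 \<xi>3) \<xi>1)"
proof -
  have s1: "DDK \<omega> p \<xi>2 \<xi>1 \<xi>3 = DDK \<omega> p \<xi>2 \<xi>3 \<xi>1" by (rule DDK_sym)
  have s2: "DDK \<omega> p \<xi>3 \<xi>2 \<xi>1 = DDK \<omega> p \<xi>3 \<xi>1 \<xi>2" by (rule DDK_sym)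
  have s3: "DDK \<omega> p \<xi>1 \<xi>3 \<xi>2 = DDK \<omega> p \<xi>1 \<xi>2 \<xi>3" by (rule DDK_sym)
  show ?thesis
    unfolding dh_def curv_expand \<xi>1_def[symmetric] \<xi>2_def[symmetric] \<xi>3_def[symmetric] s1 s2 s3
    unfolding lie_br_def
    by (simp add: mm_distribs matrix_mul_assoc algebra_simps)
qed

end



lemma has_comp:
  fixes F :: "pt \<Rightarrow> mat3"
  assumes "(F has_derivative F') (at p)"
  shows "((\<lambda>q. F q $ i $ j) has_derivative (\<lambda>\<zeta>. F' \<zeta> $ i $ j)) (at p)"
proof -
  have bl: "bounded_linear (\<lambda>A::mat3. A $ i $ j)"
    using bounded_linear_compose[OF bounded_linear_vec_nth[of j] bounded_linear_vec_nth[of i]] by simp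
  show ?thesis using bounded_linear.has_derivative[OF bl assms] .
qed

lemma Xf_tangent: "Y \<in> gLie \<Longrightarrow> Xf v Y q \<in> tangent q"
  unfolding Xf_def tangent_def by auto

context cc begin

definition dw :: "pt \<Rightarrow> 3 \<Rightarrow> 3 \<Rightarrow> 3 \<Rightarrow> 3 \<Rightarrow> real^3 \<Rightarrow> mat3 \<Rightarrow> real^3 \<Rightarrow> mat3 \<Rightarrow> pt \<Rightarrow> real" where
  "dw p i1 j1 i2 j2 vi Yi vj Yj \<zeta> =
    (let Di = K \<omega> p (Xf vi Yi p) \<zeta> + \<omega> p (Lf Yi \<zeta>); Dj = K \<omega> p (Xf vj Yj p) \<zeta> + \<omega> p (Lf Yj \<zeta>);
         Ai = \<omega> p (Xf vi Yi p); Aj = \<omega> p (Xf vj Yj p) in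
     Di$i1$j1 * Aj$i2$j2 + Ai$i1$j1 * Dj$i2$j2 - (Dj$i1$j1 * Ai$i2$j2 + Aj$i1$j1 * Di$i2$j2))"

lemma has_w: "((\<lambda>q. wedge_ent \<omega> q i1 j1 i2 j2 (Xf vi Yi q) (Xf vj Yj q)) has_derivative
   dw p i1 j1 i2 j2 vi Yi vj Yj) (at p)"
proof -
  have ai: "((\<lambda>q. \<omega> q (Xf vi Yi q)) has_derivative (\<lambda>\<zeta>. K \<omega> p (Xf vi Yi p) \<zeta> + \<omega> p (Lf Yi \<zeta>))) (at p)"
    by (rule has_alpha[OF has_Xf])
  have aj: "((\<lambda>q. \<omega> q (Xf vj Yj q)) has_derivative (\<lambda>\<zeta>. K \<omega> p (Xf vj Yj p) \<zeta> + \<omega> p (Lf Yj \<zeta>))) (at p)"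
    by (rule has_alpha[OF has_Xf])
  have "((\<lambda>q. \<omega> q (Xf vi Yi q) $ i1 $ j1 * \<omega> q (Xf vj Yj q) $ i2 $ j2
       - \<omega> q (Xf vj Yj q) $ i1 $ j1 * \<omega> q (Xf vi Yi q) $ i2 $ j2) has_derivative
     (\<lambda>\<zeta>. (\<omega> p (Xf vi Yi p) $ i1 $ j1 * (K \<omega> p (Xf vj Yj p) \<zeta> + \<omega> p (Lf Yj \<zeta>)) $ i2 $ j2
         + (K \<omega> p (Xf vi Yi p) \<zeta> + \<omega> p (Lf Yi \<zeta>)) $ i1 $ j1 * \<omega> p (Xf vj Yj p) $ i2 $ j2)
        - (\<omega> p (Xf vj Yj p) $ i1 $ j1 * (K \<omega> p (Xf vi Yi p) \<zeta> + \<omega> p (Lf Yi \<zeta>)) $ i2 $ j2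
         + (K \<omega> p (Xf vj Yj p) \<zeta> + \<omega> p (Lf Yj \<zeta>)) $ i1 $ j1 * \<omega> p (Xf vi Yi p) $ i2 $ j2))) (at p)"
    by (rule has_derivative_diff[OF has_derivative_mult[OF has_comp[OF ai] has_comp[OF aj]]
          has_derivative_mult[OF has_comp[OF aj] has_comp[OF ai]]])
  moreover have "(\<lambda>\<zeta>. (\<omega> p (Xf vi Yi p) $ i1 $ j1 * (K \<omega> p (Xf vj Yj p) \<zeta> + \<omega> p (Lf Yj \<zeta>)) $ i2 $ j2
         + (K \<omega> p (Xf vi Yi p) \<zeta> + \<omega> p (Lf Yi \<zeta>)) $ i1 $ j1 * \<omega> p (Xf vj Yj p) $ i2 $ j2)
        - (\<omega> p (Xf vj Yj p) $ i1 $ j1 * (K \<omega> p (Xf vi Yi p) \<zeta> + \<omega> p (Lf Yi \<zeta>)) $ i2 $ j2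
         + (K \<omega> p (Xf vj Yj p) \<zeta> + \<omega> p (Lf Yj \<zeta>)) $ i1 $ j1 * \<omega> p (Xf vi Yi p) $ i2 $ j2))
     = dw p i1 j1 i2 j2 vi Yi vj Yj"
    unfolding dw_def Let_def by (simp add: fun_eq_iff algebra_simps)
  ultimately show ?thesis unfolding wedge_ent_def by simp
qed

lemma coeff_lemma:
  assumes p: "p \<in> Pset"
  and nf: "\<And>q \<xi> \<eta>. q \<in> Pset \<Longrightarrow> \<xi> \<in> tangent q \<Longrightarrow> \<eta> \<in> tangent q \<Longrightarrow>
             curv \<omega> q \<xi> \<eta> $ r $ s = e q * wedge_ent \<omega> q i1 j1 i2 j2 \<xi> \<eta>"
  and Ym: "Ym \<in> gLie" and Yn: "Yn \<in> gLie"
  and nz: "wedge_ent \<omega> p i1 j1 i2 j2 (Xf vm Ym p) (Xf vn Yn p) \<noteq> 0"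
  shows "\<exists>A. (e has_derivative A) (at p within Pset) \<and>
    (\<forall>vi Yi vj Yj \<zeta>. Yi \<in> gLie \<longrightarrow> Yj \<in> gLie \<longrightarrow> \<zeta> \<in> tangent p \<longrightarrow>
       dh p vi Yi vj Yj \<zeta> $ r $ s = A \<zeta> * wedge_ent \<omega> p i1 j1 i2 j2 (Xf vi Yi p) (Xf vj Yj p)
          + e p * dw p i1 j1 i2 j2 vi Yi vj Yj \<zeta>)"
proof -
  define w where "w = (\<lambda>q. wedge_ent \<omega> q i1 j1 i2 j2 (Xf vm Ym q) (Xf vn Yn q))"
  define hm where "hm = (\<lambda>q. curv \<omega> q (Xf vm Ym q) (Xf vn Yn q) $ r $ s)"
  define et where "et = (\<lambda>q. hm q / w q)"
  have dw0: "(w has_derivative dw p i1 j1 i2 j2 vm Ym vn Yn) (at p)" unfolding w_def by (rule has_w)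
  have dhm: "(hm has_derivative (\<lambda>\<zeta>. dh p vm Ym vn Yn \<zeta> $ r $ s)) (at p)"
    unfolding hm_def by (rule has_comp[OF has_h])
  have nzp: "w p \<noteq> 0" using nz unfolding w_def .
  obtain A where dA: "(et has_derivative A) (at p)"
    unfolding et_def using has_derivative_divide[OF dhm dw0 nzp] by blast
  have cw: "isCont w p" using dw0 has_derivative_continuous by blast
  obtain \<delta> where \<delta>: "\<delta> > 0" "\<And>q. dist q p < \<delta> \<Longrightarrow> dist (w q) (w p) < \<bar>w p\<bar>"
    using cw nzp unfolding continuous_at_eps_delta by (meson zero_less_abs_iff)
  have wnz: "w q \<noteq> 0" if "dist q p < \<delta>" for q
    using \<delta>(2)[OF that] by (auto simp: dist_real_def)
  have eet: "e q = et q" if "q \<in> Pset" "dist q p < \<delta>" for q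
  proof -
    have "hm q = e q * w q" unfolding hm_def w_def
      by (rule nf[OF that(1) Xf_tangent[OF Ym] Xf_tangent[OF Yn]])
    then show ?thesis unfolding et_def using wnz[OF that(2)] by simp
  qed
  have "(e has_derivative A) (at p within Pset)"
    by (rule has_derivative_transform_within[OF has_derivative_at_withinI[OF dA] \<delta>(1) p])
      (simp add: eet)
  moreover have "dh p vi Yi vj Yj \<zeta> $ r $ s = A \<zeta> * wedge_ent \<omega> p i1 j1 i2 j2 (Xf vi Yi p) (Xf vj Yj p)
          + e p * dw p i1 j1 i2 j2 vi Yi vj Yj \<zeta>"
    if Yi: "Yi \<in> gLie" and Yj: "Yj \<in> gLie" and z: "\<zeta> \<in> tangent p" for vi Yi vj Yj \<zeta>
  proof -
    define k where "k = (\<lambda>q. curv \<omega> q (Xf vi Yi q) (Xf vj Yj q) $ r $ s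
                       - et q * wedge_ent \<omega> q i1 j1 i2 j2 (Xf vi Yi q) (Xf vj Yj q))"
    have dk: "(k has_derivative (\<lambda>\<zeta>. dh p vi Yi vj Yj \<zeta> $ r $ s -
        (et p * dw p i1 j1 i2 j2 vi Yi vj Yj \<zeta> + A \<zeta> * wedge_ent \<omega> p i1 j1 i2 j2 (Xf vi Yi p) (Xf vj Yj p)))) (at p)"
      unfolding k_def by (intro has_derivative_diff has_derivative_mult has_comp has_h dA has_w)
    have "frechet_derivative k (at p) \<zeta> = 0"
    proof (rule curve_zero[OF _ p \<delta>(1) _ z])
      show "k differentiable at p" using dk differentiable_def by blast
      fix q assume q: "q \<in> Pset" "dist q p < \<delta>"
      show "k q = 0" unfolding k_def
        using nf[OF q(1) Xf_tangent[OF Yi] Xf_tangent[OF Yj]] eet[OF q] by simp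
    qed
    moreover have "et p = e p" using eet[OF p] \<delta>(1) by simp
    ultimately show ?thesis using fun_cong[OF frechet_derivative_at[OF dk], of \<zeta>] by (simp add: algebra_simps)
  qed
  ultimately show ?thesis by blast
qed

end



lemma upper_prod_entries:
  assumes "upper3 A" "upper3 B"
  shows "(A ** B) $ 2 $ 1 = 0" "(A ** B) $ 3 $ 1 = 0" "(A ** B) $ 3 $ 2 = 0"
  using upper3_mult[OF assms] unfolding upper3_def by auto

lemma comm_gLie:
  assumes "A \<in> gLie" "B \<in> gLie"
  shows "A ** B - B ** A \<in> gLie"
  using assms unfolding gLie_def upper3_def
  by (simp add: trace_def sum_3 matrix_matrix_mult_def algebra_simps)

locale setting = cc +
  fixes a b c d :: "pt \<Rightarrow> real" and p :: pt and v1 v2 v3 :: "real^3" and Y1 Y2 Y3 :: mat3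
  assumes cf: "curvature_form \<omega> a b c d"
    and p: "p \<in> Pset"
    and Y1: "Y1 \<in> gLie" and Y2: "Y2 \<in> gLie" and Y3: "Y3 \<in> gLie"
    and o1: "\<omega> p (Xf v1 Y1 p) = Emat 2 1"
    and o2: "\<omega> p (Xf v2 Y2 p) = Emat 3 1"
    and o3: "\<omega> p (Xf v3 Y3 p) = Emat 3 2"
begin

lemma nfm: "q \<in> Pset \<Longrightarrow> \<xi> \<in> tangent q \<Longrightarrow> \<eta> \<in> tangent q \<Longrightarrow>
  curv \<omega> q \<xi> \<eta> =
          (\<chi> i j. if i = 1 \<and> j = 2 then a q * wedge_ent \<omega> q 2 1 3 1 \<xi> \<eta>
                  else if i = 1 \<and> j = 3 then b q * wedge_ent \<omega> q 2 1 3 1 \<xi> \<eta>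
                                           + c q * wedge_ent \<omega> q 3 1 3 2 \<xi> \<eta>
                  else if i = 2 \<and> j = 3 then d q * wedge_ent \<omega> q 3 1 3 2 \<xi> \<eta>
                  else 0)"
  using cf unfolding curvature_form_def by blast

lemma vert: "Z \<in> gLie \<Longrightarrow> \<omega> p (0, snd p ** Z) = Z"
proof -
  assume Z: "Z \<in> gLie"
  obtain x g where "p = (x, g)" "g \<in> Gset" using p unfolding Pset_def by auto
  then show ?thesis using cc Z unfolding cartan_connection_def by auto
qed

lemma curv_lin1: "curv \<omega> p (\<alpha> - \<beta>) \<eta> = curv \<omega> p \<alpha> \<eta> - curv \<omega> p \<beta> \<eta>"
proof -
  have e1: "K \<omega> p \<eta> (\<alpha> - \<beta>) = K \<omega> p \<eta> \<alpha> - K \<omega> p \<eta> \<beta>" by (rule linear_diff[OF lin_K2])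
  have e2: "K \<omega> p (\<alpha> - \<beta>) \<eta> = K \<omega> p \<alpha> \<eta> - K \<omega> p \<beta> \<eta>"
    using linear_diff[OF lin_K1[of p \<eta>]] by simp
  have e3: "\<omega> p (\<alpha> - \<beta>) = \<omega> p \<alpha> - \<omega> p \<beta>" by (rule linear_diff[OF lin_om])
  show ?thesis unfolding curv_expand lie_br_def e1 e2 e3 by (simp add: mm_distribs algebra_simps)
qed

lemma Lf_diff: "Lf Yi (Xf vk Yk p) - Lf Yk (Xf vi Yi p) = (0, snd p ** (Yk ** Yi - Yi ** Yk))"
  unfolding Lf_def Xf_def by (simp add: mm_distribs matrix_mul_assoc)

lemma corr_zero:
  assumes "Yi \<in> gLie" "Yk \<in> gLie" "Yj \<in> gLie"
  shows "curv \<omega> p (Lf Yi (Xf vk Yk p)) (Xf vj Yj p) - curv \<omega> p (Lf Yk (Xf vi Yi p)) (Xf vj Yj p) = 0"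
proof -
  define Z where "Z = Yk ** Yi - Yi ** Yk"
  have Z: "Z \<in> gLie" unfolding Z_def by (rule comm_gLie[OF assms(2,1)])
  have t: "(0, snd p ** Z) \<in> tangent p" using Z unfolding tangent_def by auto
  have uZ: "Z $ 2 $ 1 = 0" "Z $ 3 $ 1 = 0" "Z $ 3 $ 2 = 0" using Z unfolding gLie_def upper3_def by auto
  have "curv \<omega> p (Lf Yi (Xf vk Yk p)) (Xf vj Yj p) - curv \<omega> p (Lf Yk (Xf vi Yi p)) (Xf vj Yj p)
     = curv \<omega> p (0, snd p ** Z) (Xf vj Yj p)"
    unfolding curv_lin1[symmetric] Lf_diff Z_def ..
  also have "\<dots> = 0"
    unfolding nfm[OF p t Xf_tangent[OF assms(3)]] wedge_ent_def vert[OF Z] uZ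
    by (simp add: vec_eq_iff)
  finally show ?thesis .
qed

lemma alpha_diff:
  "(K \<omega> p (Xf vi Yi p) (Xf vk Yk p) + \<omega> p (Lf Yi (Xf vk Yk p)))
   - (K \<omega> p (Xf vk Yk p) (Xf vi Yi p) + \<omega> p (Lf Yk (Xf vi Yi p)))
   = curv \<omega> p (Xf vk Yk p) (Xf vi Yi p) - lie_br (\<omega> p (Xf vk Yk p)) (\<omega> p (Xf vi Yi p))
     + \<omega> p (0, snd p ** (Yk ** Yi - Yi ** Yk))"
proof -
  have "\<omega> p (Lf Yi (Xf vk Yk p)) - \<omega> p (Lf Yk (Xf vi Yi p)) = \<omega> p (0, snd p ** (Yk ** Yi - Yi ** Yk))"
    unfolding linear_diff[OF lin_om, symmetric] Lf_diff ..
  then show ?thesis unfolding curv_expand by (simp add: algebra_simps)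
qed

lemma cyc:
  "dh p v1 Y1 v2 Y2 (Xf v3 Y3 p) + dh p v2 Y2 v3 Y3 (Xf v1 Y1 p) + dh p v3 Y3 v1 Y1 (Xf v2 Y2 p)
   = lie_br (curv \<omega> p (Xf v1 Y1 p) (Xf v2 Y2 p)) (\<omega> p (Xf v3 Y3 p))
     + lie_br (curv \<omega> p (Xf v2 Y2 p) (Xf v3 Y3 p)) (\<omega> p (Xf v1 Y1 p))
     + lie_br (curv \<omega> p (Xf v3 Y3 p) (Xf v1 Y1 p)) (\<omega> p (Xf v2 Y2 p))"
  unfolding cyclic corr_zero[OF Y1 Y3 Y2] corr_zero[OF Y2 Y1 Y3] corr_zero[OF Y3 Y2 Y1] by simp

end



context setting begin

abbreviation "\<xi>1 \<equiv> Xf v1 Y1 p"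
abbreviation "\<xi>2 \<equiv> Xf v2 Y2 p"
abbreviation "\<xi>3 \<equiv> Xf v3 Y3 p"

definition DD :: "real^3 \<Rightarrow> mat3 \<Rightarrow> real^3 \<Rightarrow> mat3 \<Rightarrow> mat3" where
  "DD vi Yi vk Yk = K \<omega> p (Xf vi Yi p) (Xf vk Yk p) + \<omega> p (Lf Yi (Xf vk Yk p))"

lemma t1: "\<xi>1 \<in> tangent p" and t2: "\<xi>2 \<in> tangent p" and t3: "\<xi>3 \<in> tangent p"
  using Xf_tangent Y1 Y2 Y3 by auto

lemma uY: "Y1$2$1 = 0" "Y1$3$1 = 0" "Y1$3$2 = 0" "Y2$2$1 = 0" "Y2$3$1 = 0" "Y2$3$2 = 0"
  "Y3$2$1 = 0" "Y3$3$1 = 0" "Y3$3$2 = 0"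
  using Y1 Y2 Y3 unfolding gLie_def upper3_def by auto

lemma ad_entry:
  assumes "Yi \<in> gLie" "Yk \<in> gLie"
  shows "(DD vi Yi vk Yk - DD vk Yk vi Yi) $ r $ s =
     curv \<omega> p (Xf vk Yk p) (Xf vi Yi p) $ r $ s - lie_br (\<omega> p (Xf vk Yk p)) (\<omega> p (Xf vi Yi p)) $ r $ s
     + (Yk ** Yi - Yi ** Yk) $ r $ s"
  unfolding DD_def alpha_diff vert[OF comm_gLie[OF assms(2,1)]] by simp

lemma f1: "DD v1 Y1 v3 Y3 $ 2 $ 1 - DD v3 Y3 v1 Y1 $ 2 $ 1 = 0"
proof -
  have u: "(Y3 ** Y1) $ 2 $ 1 = 0" "(Y1 ** Y3) $ 2 $ 1 = 0"
    using upper_prod_entries Y1 Y3 unfolding gLie_def by auto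
  show ?thesis using ad_entry[OF Y1 Y3, of v1 v3 2 1]
    unfolding nfm[OF p t3 t1] o1 o3 u
    by (simp add: lie_br_def matrix_matrix_mult_def Emat_def sum_3 uY)
qed

lemma f2: "DD v2 Y2 v3 Y3 $ 3 $ 1 - DD v3 Y3 v2 Y2 $ 3 $ 1 = 0"
proof -
  have u: "(Y3 ** Y2) $ 3 $ 1 = 0" "(Y2 ** Y3) $ 3 $ 1 = 0"
    using upper_prod_entries Y2 Y3 unfolding gLie_def by auto
  show ?thesis using ad_entry[OF Y2 Y3, of v2 v3 3 1]
    unfolding nfm[OF p t3 t2] o2 o3 u
    by (simp add: lie_br_def matrix_matrix_mult_def Emat_def sum_3 uY)
qed

lemma f3: "DD v2 Y2 v1 Y1 $ 3 $ 1 - DD v1 Y1 v2 Y2 $ 3 $ 1 = 0"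
proof -
  have u: "(Y1 ** Y2) $ 3 $ 1 = 0" "(Y2 ** Y1) $ 3 $ 1 = 0"
    using upper_prod_entries Y2 Y1 unfolding gLie_def by auto
  show ?thesis using ad_entry[OF Y2 Y1, of v2 v1 3 1]
    unfolding nfm[OF p t1 t2] o2 o1 u
    by (simp add: lie_br_def matrix_matrix_mult_def Emat_def sum_3 uY)
qed

lemma f4: "DD v3 Y3 v1 Y1 $ 3 $ 2 - DD v1 Y1 v3 Y3 $ 3 $ 2 = 0"
proof -
  have u: "(Y1 ** Y3) $ 3 $ 2 = 0" "(Y3 ** Y1) $ 3 $ 2 = 0"
    using upper_prod_entries Y3 Y1 unfolding gLie_def by auto
  show ?thesis using ad_entry[OF Y3 Y1, of v3 v1 3 2]
    unfolding nfm[OF p t1 t3] o3 o1 u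
    by (simp add: lie_br_def matrix_matrix_mult_def Emat_def sum_3 uY)
qed

lemma cyc12: "(dh p v1 Y1 v2 Y2 \<xi>3 + dh p v2 Y2 v3 Y3 \<xi>1 + dh p v3 Y3 v1 Y1 \<xi>2) $ 1 $ 2 = b p"
  unfolding cyc nfm[OF p t1 t2] nfm[OF p t2 t3] nfm[OF p t3 t1] o1 o2 o3
  by (simp add: lie_br_def matrix_matrix_mult_def Emat_def sum_3 wedge_ent_def o1 o2 o3)

lemma cyc23: "(dh p v1 Y1 v2 Y2 \<xi>3 + dh p v2 Y2 v3 Y3 \<xi>1 + dh p v3 Y3 v1 Y1 \<xi>2) $ 2 $ 3 = - c p"
  unfolding cyc nfm[OF p t1 t2] nfm[OF p t2 t3] nfm[OF p t3 t1] o1 o2 o3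
  by (simp add: lie_br_def matrix_matrix_mult_def Emat_def sum_3 wedge_ent_def o1 o2 o3)

lemma claim1: "\<exists>A. (a has_derivative A) (at p within Pset) \<and> b p = A \<xi>3"
proof -
  have nf: "curv \<omega> q \<xi> \<eta> $ 1 $ 2 = a q * wedge_ent \<omega> q 2 1 3 1 \<xi> \<eta>"
    if "q \<in> Pset" "\<xi> \<in> tangent q" "\<eta> \<in> tangent q" for q \<xi> \<eta>
    unfolding nfm[OF that] by simp
  have nz: "wedge_ent \<omega> p 2 1 3 1 \<xi>1 \<xi>2 \<noteq> 0" unfolding wedge_ent_def o1 o2 Emat_def by simp
  obtain A where dA: "(a has_derivative A) (at p within Pset)" and key:
    "\<And>vi Yi vj Yj \<zeta>. Yi \<in> gLie \<Longrightarrow> Yj \<in> gLie \<Longrightarrow> \<zeta> \<in> tangent p \<Longrightarrow>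
       dh p vi Yi vj Yj \<zeta> $ 1 $ 2 = A \<zeta> * wedge_ent \<omega> p 2 1 3 1 (Xf vi Yi p) (Xf vj Yj p)
          + a p * dw p 2 1 3 1 vi Yi vj Yj \<zeta>"
    using coeff_lemma[OF p nf Y1 Y2 nz] by blast
  have "b p = A \<xi>3 + a p * (DD v1 Y1 v3 Y3 $ 2 $ 1 - DD v3 Y3 v1 Y1 $ 2 $ 1)
      + a p * (DD v2 Y2 v3 Y3 $ 3 $ 1 - DD v3 Y3 v2 Y2 $ 3 $ 1)"
    using cyc12 key[where vi=v1 and vj=v2, OF Y1 Y2 t3] key[where vi=v2 and vj=v3, OF Y2 Y3 t1] key[where vi=v3 and vj=v1, OF Y3 Y1 t2]
    unfolding dw_def Let_def wedge_ent_def o1 o2 o3 DD_def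
    by (simp add: Emat_def algebra_simps o1 o2 o3)
  then show ?thesis using f1 f2 dA by auto
qed

lemma claim2: "\<exists>A. (d has_derivative A) (at p within Pset) \<and> c p = - A \<xi>1"
proof -
  have nf: "curv \<omega> q \<xi> \<eta> $ 2 $ 3 = d q * wedge_ent \<omega> q 3 1 3 2 \<xi> \<eta>"
    if "q \<in> Pset" "\<xi> \<in> tangent q" "\<eta> \<in> tangent q" for q \<xi> \<eta>
    unfolding nfm[OF that] by simp
  have nz: "wedge_ent \<omega> p 3 1 3 2 \<xi>2 \<xi>3 \<noteq> 0" unfolding wedge_ent_def o2 o3 Emat_def by simp
  obtain A where dA: "(d has_derivative A) (at p within Pset)" and key:
    "\<And>vi Yi vj Yj \<zeta>. Yi \<in> gLie \<Longrightarrow> Yj \<in> gLie \<Longrightarrow> \<zeta> \<in> tangent p \<Longrightarrow>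
       dh p vi Yi vj Yj \<zeta> $ 2 $ 3 = A \<zeta> * wedge_ent \<omega> p 3 1 3 2 (Xf vi Yi p) (Xf vj Yj p)
          + d p * dw p 3 1 3 2 vi Yi vj Yj \<zeta>"
    using coeff_lemma[OF p nf Y2 Y3 nz] by blast
  have "- c p = A \<xi>1 + d p * (DD v2 Y2 v1 Y1 $ 3 $ 1 - DD v1 Y1 v2 Y2 $ 3 $ 1)
      + d p * (DD v3 Y3 v1 Y1 $ 3 $ 2 - DD v1 Y1 v3 Y3 $ 3 $ 2)"
    using cyc23 key[where vi=v1 and vj=v2, OF Y1 Y2 t3] key[where vi=v2 and vj=v3, OF Y2 Y3 t1] key[where vi=v3 and vj=v1, OF Y3 Y1 t2]
    unfolding dw_def Let_def wedge_ent_def o1 o2 o3 DD_def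
    by (simp add: Emat_def algebra_simps o1 o2 o3)
  then show ?thesis using f3 f4 dA by auto
qed

end



lemma tangent_Xf: "\<xi> \<in> tangent p \<Longrightarrow> \<exists>v Y. Y \<in> gLie \<and> \<xi> = Xf v Y p"
  unfolding tangent_def Xf_def by auto

lemma Emat_sl3: "i \<noteq> j \<Longrightarrow> Emat i j \<in> sl3"
  unfolding sl3_def Emat_def trace_def by (auto intro!: sum.neutral)

lemma surj_om:
  assumes "cartan_connection \<omega>" "p \<in> Pset" "Z \<in> sl3"
  shows "\<exists>v Y. Y \<in> gLie \<and> \<omega> p (Xf v Y p) = Z"
proof -
  have "\<omega> p ` tangent p = sl3" using assms unfolding cartan_connection_def bij_betw_def by blast
  then obtain \<xi> where "\<xi> \<in> tangent p" "\<omega> p \<xi> = Z" using assms(3) by force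
  then show ?thesis using tangent_Xf by blast
qed

theorem lemma6p1:
  fixes E1 E2 :: "real^3 \<Rightarrow> (real^3) set"
    and \<omega> :: "pt \<Rightarrow> pt \<Rightarrow> mat3"
    and a b c d :: "pt \<Rightarrow> real"
  assumes "nondegenerate_pair E1 E2"
    and "cartan_connection \<omega>"
    and "adapted \<omega> E1 E2"
    and "curvature_form \<omega> a b c d"
  shows "\<forall>p\<in>Pset.
           (\<forall>\<xi>\<in>tangent p. \<omega> p \<xi> = Emat 3 2 \<longrightarrow>
              (\<exists>A. (a has_derivative A) (at p within Pset) \<and> b p = A \<xi>)) \<and>
           (\<forall>\<xi>\<in>tangent p. \<omega> p \<xi> = Emat 2 1 \<longrightarrow>
              (\<exists>A. (d has_derivative A) (at p within Pset) \<and> c p = - A \<xi>))"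
proof (intro ballI conjI impI)
  fix p assume p: "p \<in> Pset"
  have s21: "Emat 2 1 \<in> sl3" and s31: "Emat 3 1 \<in> sl3" and s32: "Emat 3 2 \<in> sl3"
    by (simp_all add: Emat_sl3)
  obtain v1 Y1 where 1: "Y1 \<in> gLie" "\<omega> p (Xf v1 Y1 p) = Emat 2 1"
    using surj_om[OF assms(2) p s21] by blast
  obtain v2 Y2 where 2: "Y2 \<in> gLie" "\<omega> p (Xf v2 Y2 p) = Emat 3 1"
    using surj_om[OF assms(2) p s31] by blast
  obtain v3 Y3 where 3: "Y3 \<in> gLie" "\<omega> p (Xf v3 Y3 p) = Emat 3 2"
    using surj_om[OF assms(2) p s32] by blast
  {
    fix \<xi> assume xi: "\<xi> \<in> tangent p" "\<omega> p \<xi> = Emat 3 2"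
    then obtain v Y where Y: "Y \<in> gLie" "\<xi> = Xf v Y p" using tangent_Xf by blast
    interpret setting \<omega> a b c d p v1 v2 v Y1 Y2 Y
      using assms(2,4) p 1 2 Y xi by unfold_locales auto
    show "\<exists>A. (a has_derivative A) (at p within Pset) \<and> b p = A \<xi>"
      using claim1 Y by simp
  next
    fix \<xi> assume xi: "\<xi> \<in> tangent p" "\<omega> p \<xi> = Emat 2 1"
    then obtain v Y where Y: "Y \<in> gLie" "\<xi> = Xf v Y p" using tangent_Xf by blast
    interpret setting \<omega> a b c d p v v2 v3 Y Y2 Y3
      using assms(2,4) p 2 3 Y xi by unfold_locales auto
    show "\<exists>A. (d has_derivative A) (at p within Pset) \<and> c p = - A \<xi>"
      using claim2 Y by simp
  }
qed



end
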